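(* Let $C:\mathbb{R}^n\to\mathbb{R}$ be convex, increasing and $\mathbf 1$-invariant with $C(\vec 0)>0$. Then for every $\vec q\in\mathbb{R}^n_{>0}$ there exists a unique $\alpha>0$ with $C(-\vec q/\alpha)=0$; hence $\varphi:\mathbb{R}^n_{>0}\to\mathbb{R}$, $\varphi(\vec q)=$ this $\alpha$, is well-defined.
   Context: $\mathbf 1=(1,\dots,1)$. $C$ is $\mathbf 1$-invariant if $C(\vec q+\alpha\mathbf 1)=C(\vec q)+\alpha$ for all $\vec q,\alpha$; increasing if $C(\vec q)>C(\vec q')$ whenever $\vec q\succeq\vec q'$ coordinatewise and $\vec q\neq\vec q'$. $\mathbb{R}^n_{>0}$ is the set of vectors with all coordinates strictly positive. *)

theory Defs
  imports "HOL-Analysis.Analysis"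
begin

definition ones :: "real ^ 'n" where
  "ones = (\<chi> i. 1)"

definition one_invariant :: "(real ^ 'n \<Rightarrow> real) \<Rightarrow> bool" where
  "one_invariant C \<longleftrightarrow> (\<forall>q \<alpha>. C (q + \<alpha> *\<^sub>R ones) = C q + \<alpha>)"

definition increasing_fn :: "(real ^ 'n \<Rightarrow> real) \<Rightarrow> bool" where
  "increasing_fn C \<longleftrightarrow> (\<forall>q q'. (\<forall>i. q $ i \<ge> q' $ i) \<and> q \<noteq> q' \<longrightarrow> C q > C q')"

end

theory Submission
  imports Defs
begin

theorem lemma4p3:
  fixes C :: "real ^ 'n \<Rightarrow> real"
  assumes "convex_on UNIV C"
    and "increasing_fn C"
    and "one_invariant C"
    and "C 0 > 0"
  shows "\<forall>q :: real ^ 'n. (\<forall>i. q $ i > 0) \<longrightarrow>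
           (\<exists>!\<alpha>::real. \<alpha> > 0 \<and> C (- ((1 / \<alpha>) *\<^sub>R q)) = 0)"
proof (intro allI impI)
  fix q :: "real ^ 'n"
  assume qpos: "\<forall>i. q $ i > 0"
  have mono: "C x \<le> C y" if "\<forall>i. x $ i \<le> y $ i" for x y
    using assms(2) that unfolding increasing_fn_def
    by (cases "x = y") (auto intro: less_imp_le)
  have strict: "C (- (s *\<^sub>R q)) < C (- (t *\<^sub>R q))" if "t < s" for s t
  proof -
    have "\<forall>i. (- (t *\<^sub>R q)) $ i \<ge> (- (s *\<^sub>R q)) $ i"
      using that qpos by (auto intro: mult_right_mono less_imp_le)
    moreover have "- (t *\<^sub>R q) \<noteq> - (s *\<^sub>R q)"
    proof
      assume "- (t *\<^sub>R q) = - (s *\<^sub>R q)"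
      then have "t = s \<or> q = 0" by simp
      moreover have "q $ undefined \<noteq> 0" using qpos[rule_format, of undefined] by simp
      ultimately have "t = s" by auto
      then show False using that qpos[rule_format, of undefined] by simp
    qed
    ultimately show ?thesis using assms(2) unfolding increasing_fn_def by blast
  qed
  define m where "m = Min (range (\<lambda>i. q $ i))"
  have mle: "m \<le> q $ i" for i unfolding m_def by (rule Min_le) auto
  have mpos: "m > 0" unfolding m_def using qpos by (subst Min_gr_iff) auto
  define t0 where "t0 = C 0 / m"
  have t0pos: "t0 > 0" unfolding t0_def using mpos assms(4) by simp
  have "C (- (t0 *\<^sub>R q)) \<le> C (0 + (- (t0 * m)) *\<^sub>R ones)"
    apply (rule mono)
    using mle t0pos by (auto simp: ones_def intro: mult_left_mono)
  also have "\<dots> = C 0 - t0 * m" using assms(3) unfolding one_invariant_def by (metis diff_conv_add_uminus)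
  also have "\<dots> = 0" unfolding t0_def using mpos by simp
  finally have f0: "C (- (t0 *\<^sub>R q)) \<le> 0" .
  have cC: "continuous_on UNIV C" by (rule convex_on_continuous[OF open_UNIV assms(1)])
  have cont: "continuous_on {0..t0} (\<lambda>t. C (- (t *\<^sub>R q)))"
    by (rule continuous_on_compose2[OF cC]) (auto intro!: continuous_intros)
  obtain t where t: "0 \<le> t" "t \<le> t0" "C (- (t *\<^sub>R q)) = 0"
    using IVT2'[of "\<lambda>t. C (- (t *\<^sub>R q))" t0 0 0, OF f0 _ _ cont] assms(4) t0pos by auto
  have tpos: "t > 0" using t assms(4) by (cases "t = 0") auto
  show "\<exists>!\<alpha>::real. \<alpha> > 0 \<and> C (- ((1 / \<alpha>) *\<^sub>R q)) = 0"
  proof (rule ex1I[of _ "1 / t"])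
    show "1 / t > 0 \<and> C (- ((1 / (1 / t)) *\<^sub>R q)) = 0" using tpos t by simp
  next
    fix a assume a: "a > 0 \<and> C (- ((1 / a) *\<^sub>R q)) = 0"
    have "1 / a = t"
    proof (rule ccontr)
      assume "1 / a \<noteq> t"
      then consider "1 / a < t" | "t < 1 / a" by linarith
      then show False using strict a t by cases fastforce+
    qed
    then show "a = 1 / t" using a tpos by (auto simp: field_simps)
  qed
qed

end
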